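(* Let $(X,+)$ be an uncountable abelian Polish group with a complete metric $d$. Let $\mathcal I\subseteq\mathcal P(X)$ be a proper, translation-invariant $\sigma$-ideal containing singletons and having a Borel base, such that for every Borel set $B\notin\mathcal I$ and every family $\mathcal D\subseteq\mathcal I$ with $|\mathcal D|<\mathfrak c$ we have $|B\setminus\bigcup\mathcal D|=\mathfrak c$, and such that there is $a$ in the range of $d$, $a\neq0$, with $\{y\in X:d(x,y)=a\}\in\mathcal I$ for every $x\in X$. If $\kappa$ is a cardinal with $2^\kappa=\mathfrak c$, then there exists a family $\{B_\xi:\xi<\kappa\}$ of pairwise disjoint subsets of $X$ such that (1) every $B_\xi$ is completely $\mathcal I$-nonmeasurable, (2) no $B_\xi$ is a $2$-covering, and (3) $\{B_\xi:\xi<\kappa\}$ is a $\kappa$-S-covering.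
   Context: $\mathfrak c=|\mathbb R|$. A set $N\subseteq X$ is completely $\mathcal I$-nonmeasurable if for every Borel $A\notin\mathcal I$ both $A\cap N\notin\mathcal I$ and $A\setminus N\notin\mathcal I$. A set $A\subseteq X$ is a $2$-covering if for every $C\subseteq X$ with $|C|=2$ there is $x\in X$ with $C+x\subseteq A$. A family $\mathcal A$ of pairwise disjoint subsets of $X$ is a $\kappa$-S-covering if $|\mathcal A|=\kappa$ and for every $F\subseteq X$ with $|F|=\kappa$ there is $t\in X$ such that $F+t\subseteq\bigcup\mathcal A$ and $|(F+t)\cap A|=1$ for all $A\in\mathcal A$. *)

theory Defs
  imports "HOL-Analysis.Analysis"
begin

text \<open>Cardinalities are compared via the BNF cardinal library (card_of, ordLess, ordIso);
  the continuum c is the cardinality of UNIV :: real set.\<close>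

definition sigma_ideal :: "'a set set \<Rightarrow> bool" where
  "sigma_ideal I \<longleftrightarrow> {} \<in> I \<and> (\<forall>A B. A \<in> I \<and> B \<subseteq> A \<longrightarrow> B \<in> I)
     \<and> (\<forall>C. countable C \<and> C \<subseteq> I \<longrightarrow> \<Union>C \<in> I)"

definition translation_invariant :: "('a::ab_group_add) set set \<Rightarrow> bool" where
  "translation_invariant I \<longleftrightarrow> (\<forall>A \<in> I. \<forall>x. (\<lambda>y. y + x) ` A \<in> I)"

definition has_borel_base :: "('a::topological_space) set set \<Rightarrow> bool" where
  "has_borel_base I \<longleftrightarrow> (\<forall>A \<in> I. \<exists>B \<in> sets borel. A \<subseteq> B \<and> B \<in> I)"

definition completely_nonmeasurable :: "('a::topological_space) set set \<Rightarrow> 'a set \<Rightarrow> bool" where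
  "completely_nonmeasurable I N \<longleftrightarrow>
     (\<forall>A \<in> sets borel. A \<notin> I \<longrightarrow> A \<inter> N \<notin> I \<and> A - N \<notin> I)"

definition two_covering :: "('a::ab_group_add) set \<Rightarrow> bool" where
  "two_covering A \<longleftrightarrow> (\<forall>C. card C = 2 \<longrightarrow> (\<exists>x. (\<lambda>c. c + x) ` C \<subseteq> A))"

text \<open>kappa-S-covering, where the cardinal kappa is given as the cardinality of a set K.\<close>
definition S_covering :: "'k set \<Rightarrow> ('a::ab_group_add) set set \<Rightarrow> bool" where
  "S_covering K \<A> \<longleftrightarrow>
     disjoint \<A> \<and> ordIso2 (card_of \<A>) (card_of K) \<and>
     (\<forall>F. ordIso2 (card_of F) (card_of K) \<longrightarrow>
        (\<exists>t. (\<lambda>f. f + t) ` F \<subseteq> \<Union>\<A> \<and> (\<forall>A \<in> \<A>. card ((\<lambda>f. f + t) ` F \<inter> A) = 1)))"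

end

theory Submission
  imports Defs
begin


datatype code = Emp | Gen nat | Cmp code | Uni "nat \<Rightarrow> code"

primrec enc :: "code \<Rightarrow> nat list \<Rightarrow> nat" where
  "enc Emp = (\<lambda>l. 0)"
| "enc (Gen n) = (\<lambda>l. n + 3)"
| "enc (Cmp c) = (\<lambda>l. case l of [] \<Rightarrow> 1 | i # l' \<Rightarrow> enc c l')"
| "enc (Uni f) = (\<lambda>l. case l of [] \<Rightarrow> 2 | i # l' \<Rightarrow> enc (f i) l')"

lemma enc_inj: "enc c1 = enc c2 \<Longrightarrow> c1 = c2"
proof (induction c1 arbitrary: c2)
  case Emp
  then show ?case by (cases c2) (auto dest!: fun_cong[where x="[]"])
next
  case (Gen n)
  then show ?case by (cases c2) (auto dest!: fun_cong[where x="[]"])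
next
  case (Cmp c)
  show ?case
  proof (cases c2)
    case (Cmp d)
    with Cmp.prems have "\<And>l. enc c l = enc d l"
      by (metis enc.simps(3) list.simps(5))
    then show ?thesis using Cmp Cmp.IH by (simp add: fun_eq_iff)
  qed (use Cmp.prems in \<open>auto dest!: fun_cong[where x="[]"]\<close>)
next
  case (Uni f)
  show ?case
  proof (cases c2)
    case (Uni g)
    with Uni.prems have "\<And>i l. enc (f i) l = enc (g i) l"
      by (metis enc.simps(4) list.simps(5))
    then show ?thesis using Uni Uni.IH by (simp add: fun_eq_iff)
  qed (use Uni.prems in \<open>auto dest!: fun_cong[where x="[]"]\<close>)
qed

primrec interp :: "'a set set \<Rightarrow> code \<Rightarrow> 'a set" where
  "interp G Emp = {}"
| "interp G (Gen n) = from_nat_into G n"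
| "interp G (Cmp c) = - interp G c"
| "interp G (Uni f) = (\<Union>i. interp G (f i))"

lemma sigma_sets_interp:
  assumes "countable G" "S \<in> sigma_sets UNIV G"
  shows "S \<in> range (interp G)"
  using assms(2)
proof induction
  case (Basic a)
  then show ?case using assms(1)
    by (metis from_nat_into_to_nat_on interp.simps(2) rangeI)
next
  case Empty
  then show ?case by (metis interp.simps(1) rangeI)
next
  case (Compl a)
  then obtain c where "a = interp G c" by auto
  then have "UNIV - a = interp G (Cmp c)" by auto
  then show ?case by (metis rangeI)
next
  case (Union a)
  then have "\<forall>i. \<exists>c. a i = interp G c" by (metis image_iff)
  then obtain f where "\<And>i. a i = interp G (f i)" by metis
  then have "(\<Union>i. a i) = interp G (Uni f)" by auto
  then show ?case by (metis rangeI)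
qed

lemma borel_in_range_interp:
  "\<exists>G::'a::second_countable_topology set set. sets borel \<subseteq> range (interp G)"
proof -
  obtain G :: "'a set set" where G: "countable G" "topological_basis G"
    using ex_countable_basis by blast
  then have "sets (borel::'a measure) = sigma_sets UNIV G"
    by (simp add: borel_eq_countable_basis)
  then show ?thesis using sigma_sets_interp[OF G(1)] by blast
qed



lemma times_ordLess_infinite:
  assumes INF: "\<not>finite C" and LESS1: "(card_of A, card_of C) \<in> ordLess"
    and LESS2: "(card_of B, card_of C) \<in> ordLess"
  shows "(card_of (A \<times> B), card_of C) \<in> ordLess"
proof(cases "A = {} \<or> B = {}")
  case True
  hence "A \<times> B = {}" by blast
  moreover have "C \<noteq> {}" using INF by auto
  ultimately show ?thesis
    using card_of_ordLess[of C "A \<times> B"] by auto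
next
  case Case2: False
  {assume *: "(card_of C, card_of (A \<times> B)) \<in> ordLeq"
    hence "\<not>finite (A \<times> B)" using INF card_of_ordLeq_finite by blast
    hence 1: "\<not>finite A \<or> \<not>finite B" using finite_cartesian_product by blast
    {assume Case21: "(card_of A, card_of B) \<in> ordLeq"
      hence "\<not>finite B" using 1 card_of_ordLeq_finite by blast
      hence "(card_of (A \<times> B), card_of B) \<in> ordIso" using Case2 Case21
        by (auto simp: card_of_Times_infinite)
      hence False using LESS2 not_ordLess_ordLeq * ordLeq_ordIso_trans by blast
    }
    moreover
    {assume Case22: "(card_of B, card_of A) \<in> ordLeq"
      hence "\<not>finite A" using 1 card_of_ordLeq_finite by blast
      hence "(card_of (A \<times> B), card_of A) \<in> ordIso" using Case2 Case22
        by (auto simp: card_of_Times_infinite)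
      hence False using LESS1 not_ordLess_ordLeq * ordLeq_ordIso_trans by blast
    }
    ultimately have False using ordLeq_total card_of_Well_order[of A]
        card_of_Well_order[of B] by blast
  }
  thus ?thesis using ordLess_or_ordLeq[of "card_of (A \<times> B)" "card_of C"]
      card_of_Well_order[of "A \<times> B"] card_of_Well_order[of "C"] by auto
qed

lemma transfinite_construction:
  fixes r :: "'i rel" and K :: "'k set" and Good :: "'i \<Rightarrow> 'a set \<Rightarrow> ('k \<Rightarrow> 'a) \<Rightarrow> bool"
  assumes r: "Card_order r" "Field r = UNIV" "\<not> finite (UNIV::'i set)"
    and K: "(card_of K, r) \<in> ordLess"
    and ex: "\<And>\<alpha> S. (card_of S, r) \<in> ordLess \<Longrightarrow> \<exists>h. Good \<alpha> S h"
  shows "\<exists>H. \<forall>\<alpha>. Good \<alpha> (\<Union>\<beta>\<in>underS r \<alpha>. H \<beta> ` K) (H \<alpha>)"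
proof -
  define F where "F = (\<lambda>rec \<alpha>. SOME h. Good \<alpha> (\<Union>\<beta>\<in>underS r \<alpha>. rec \<beta> ` K) h)"
  define H where "H = wfrec (r - Id) F"
  have wf: "wf (r - Id)"
    using r(1) wo_rel.WF unfolding wo_rel_def card_order_on_def by blast
  have iso: "(card_of (UNIV::'i set), r) \<in> ordIso"
    using card_of_Field_ordIso[OF r(1)] r(2) by simp
  have "Good \<alpha> (\<Union>\<beta>\<in>underS r \<alpha>. H \<beta> ` K) (H \<alpha>)" for \<alpha>
  proof -
    have eqU: "(\<Union>\<beta>\<in>underS r \<alpha>. cut H (r - Id) \<alpha> \<beta> ` K) = (\<Union>\<beta>\<in>underS r \<alpha>. H \<beta> ` K)"
      by (intro SUP_cong refl) (simp add: cut_apply underS_def)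
    have "H \<alpha> = F (cut H (r - Id) \<alpha>) \<alpha>" unfolding H_def by (rule wfrec[OF wf])
    also have "\<dots> = F H \<alpha>" unfolding F_def eqU ..
    finally have Ha: "H \<alpha> = (SOME h. Good \<alpha> (\<Union>\<beta>\<in>underS r \<alpha>. H \<beta> ` K) h)"
      unfolding F_def .
    have "(\<Union>\<beta>\<in>underS r \<alpha>. H \<beta> ` K) = (\<lambda>(\<beta>,\<xi>). H \<beta> \<xi>) ` (underS r \<alpha> \<times> K)"
      by auto
    then have le: "(card_of (\<Union>\<beta>\<in>underS r \<alpha>. H \<beta> ` K), card_of (underS r \<alpha> \<times> K)) \<in> ordLeq"
      by (metis card_of_image)
    have u: "(card_of (underS r \<alpha>), card_of (UNIV::'i set)) \<in> ordLess"
      using card_of_underS[OF r(1)] r(2) iso ordLess_ordIso_trans ordIso_symmetric by blast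
    have k: "(card_of K, card_of (UNIV::'i set)) \<in> ordLess"
      using K iso ordLess_ordIso_trans ordIso_symmetric by blast
    have "(card_of (underS r \<alpha> \<times> K), card_of (UNIV::'i set)) \<in> ordLess"
      by (rule times_ordLess_infinite[OF r(3) u k])
    then have "(card_of (\<Union>\<beta>\<in>underS r \<alpha>. H \<beta> ` K), r) \<in> ordLess"
      using le iso ordLeq_ordLess_trans ordLess_ordIso_trans by blast
    then show ?thesis unfolding Ha by (rule someI_ex[OF ex])
  qed
  then show ?thesis by blast
qed



lemma codes_le_Pow:
  assumes "\<not> finite (K::'k set)"
  shows "(card_of (UNIV::code set), card_of (Pow K)) \<in> ordLeq"
proof -
  obtain f :: "nat \<Rightarrow> 'k" where f: "inj f" "range f \<subseteq> K"
    using infinite_countable_subset[OF assms] by blast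
  define j :: "nat list \<times> nat \<Rightarrow> 'k" where "j = f \<circ> to_nat"
  have j: "inj j" "\<And>x. j x \<in> K" using f by (auto simp: j_def inj_compose)
  define \<Phi> where "\<Phi> c = j ` {(l, enc c l) | l. True}" for c
  have "inj_on \<Phi> UNIV"
  proof
    fix c1 c2 assume "\<Phi> c1 = \<Phi> c2"
    then have "{(l, enc c1 l) | l. True} = {(l, enc c2 l) | l. True}"
      unfolding \<Phi>_def using j(1) by (simp add: inj_image_eq_iff)
    then have "enc c1 = enc c2" by (auto simp: fun_eq_iff)
    then show "c1 = c2" by (rule enc_inj)
  qed
  moreover have "\<Phi> c \<in> Pow K" for c using j(2) by (auto simp: \<Phi>_def)
  ultimately show ?thesis by (intro card_of_ordLeqI[of \<Phi>]) auto
qed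

lemma Fs_le_Pow:
  assumes inf: "\<not> finite (K::'k set)"
    and X: "(card_of (UNIV::'a set), card_of (Pow K)) \<in> ordIso"
  shows "(card_of {F::'a set. (card_of F, card_of K) \<in> ordIso}, card_of (Pow K)) \<in> ordLeq"
proof -
  obtain \<beta> :: "'a \<Rightarrow> 'k set" where \<beta>: "bij_betw \<beta> UNIV (Pow K)"
    using X card_of_ordIso by blast
  obtain p :: "'k \<times> 'k \<Rightarrow> 'k" where p: "bij_betw p (K \<times> K) K"
    using card_of_Times_same_infinite[OF inf] card_of_ordIso by blast
  define e where "e F = (SOME e. bij_betw e K F)" for F :: "'a set"
  have e: "bij_betw (e F) K F" if "(card_of F, card_of K) \<in> ordIso" for F
  proof -
    have "\<exists>e. bij_betw e K F" using that ordIso_symmetric card_of_ordIso by blast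
    then show ?thesis unfolding e_def by (rule someI_ex)
  qed
  define G where "G F = {(\<xi>, \<zeta>). \<xi> \<in> K \<and> \<zeta> \<in> \<beta> (e F \<xi>)}" for F
  define \<Phi> where "\<Phi> F = p ` G F" for F
  have GK: "G F \<subseteq> K \<times> K" for F
    using \<beta> unfolding G_def bij_betw_def by auto
  have "inj_on \<Phi> {F::'a set. (card_of F, card_of K) \<in> ordIso}"
  proof
    fix F1 F2 assume F1: "F1 \<in> {F::'a set. (card_of F, card_of K) \<in> ordIso}"
      and F2: "F2 \<in> {F::'a set. (card_of F, card_of K) \<in> ordIso}" and eq: "\<Phi> F1 = \<Phi> F2"
    have "G F1 = G F2"
      using eq GK p unfolding \<Phi>_def bij_betw_def by (meson inj_on_image_eq_iff)
    then have "\<beta> (e F1 \<xi>) = \<beta> (e F2 \<xi>)" if "\<xi> \<in> K" for \<xi>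
    proof -
      have s1: "\<beta> (e F1 \<xi>) \<subseteq> K" "\<beta> (e F2 \<xi>) \<subseteq> K"
        using \<beta> unfolding bij_betw_def by auto
      show ?thesis
      proof (rule set_eqI)
        fix z
        have "(\<xi>, z) \<in> G F1 \<longleftrightarrow> (\<xi>, z) \<in> G F2" using \<open>G F1 = G F2\<close> by simp
        then show "z \<in> \<beta> (e F1 \<xi>) \<longleftrightarrow> z \<in> \<beta> (e F2 \<xi>)" using that unfolding G_def by auto
      qed
    qed
    then have "e F1 \<xi> = e F2 \<xi>" if "\<xi> \<in> K" for \<xi>
      using that \<beta> unfolding bij_betw_def inj_on_def by blast
    then have "e F1 ` K = e F2 ` K" by auto
    then show "F1 = F2" using e F1 F2 unfolding bij_betw_def by auto
  qed
  moreover have "\<Phi> F \<in> Pow K" for F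
    using GK p unfolding \<Phi>_def bij_betw_def by auto
  ultimately show ?thesis by (intro card_of_ordLeqI[of \<Phi>]) auto
qed



lemma meets_imp_nonideal:
  fixes I :: "('a::topological_space) set set"
  assumes sigma: "sigma_ideal I" and base: "has_borel_base I"
    and meets: "\<And>A. A \<in> sets borel \<Longrightarrow> A \<notin> I \<Longrightarrow> A \<inter> N \<noteq> {}"
    and A: "A \<in> sets borel" "A \<notin> I"
  shows "A \<inter> N \<notin> I"
proof
  assume "A \<inter> N \<in> I"
  then obtain C where C: "C \<in> sets borel" "A \<inter> N \<subseteq> C" "C \<in> I"
    using base unfolding has_borel_base_def by blast
  have AC: "A - C \<in> sets borel" using A C by auto
  have "A - C \<notin> I"
  proof
    assume "A - C \<in> I"
    moreover have "countable {A - C, C}" by simp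
    ultimately have "\<Union>{A - C, C} \<in> I" using sigma C(3) unfolding sigma_ideal_def
      by (metis empty_subsetI insert_subset)
    moreover have "A \<subseteq> \<Union>{A - C, C}" by auto
    ultimately have "A \<in> I" using sigma unfolding sigma_ideal_def by blast
    then show False using A by blast
  qed
  then have "(A - C) \<inter> N \<noteq> {}" using meets AC by blast
  then show False using C(2) by blast
qed

lemma avoid:
  fixes I :: "('a::topological_space) set set" and K :: "'k set"
  assumes large: "\<forall>B \<in> sets borel. B \<notin> I \<longrightarrow>
        (\<forall>\<D>. \<D> \<subseteq> I \<and> (card_of \<D>, card_of (UNIV :: real set)) \<in> ordLess \<longrightarrow>
           ordIso2 (card_of (B - \<Union>\<D>)) (card_of (UNIV :: real set)))"
    and singletons: "\<forall>x. {x} \<in> I"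
    and A: "A \<in> sets borel" "A \<notin> I"
    and bad: "(card_of bad, card_of (UNIV :: real set)) \<in> ordLess"
    and K: "(card_of K, card_of (UNIV :: real set)) \<in> ordLess"
  shows "\<exists>h. inj_on h K \<and> h ` K \<subseteq> A - bad"
proof -
  define D where "D = (\<lambda>x. {x}) ` bad"
  have "D \<subseteq> I" using singletons by (auto simp: D_def)
  moreover have "(card_of D, card_of (UNIV :: real set)) \<in> ordLess"
    unfolding D_def using card_of_image bad ordLeq_ordLess_trans by blast
  ultimately have "ordIso2 (card_of (A - \<Union>D)) (card_of (UNIV :: real set))"
    using large A by blast
  moreover have "\<Union>D = bad" by (auto simp: D_def)
  ultimately have "ordIso2 (card_of (A - bad)) (card_of (UNIV :: real set))" by simp
  then have "(card_of K, card_of (A - bad)) \<in> ordLeq"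
    using K ordLess_ordIso_trans ordIso_symmetric ordLess_imp_ordLeq by blast
  then show ?thesis using card_of_ordLeq by blast
qed



theorem mainTheorem11:
  fixes I :: "('a::{polish_space, ab_group_add, topological_group_add}) set set"
    and K :: "'k set"
  assumes uncountable: "uncountable (UNIV :: 'a set)"
    and proper: "UNIV \<notin> I"
    and sigma: "sigma_ideal I"
    and transl: "translation_invariant I"
    and singletons: "\<forall>x. {x} \<in> I"
    and base: "has_borel_base I"
    and large: "\<forall>B \<in> sets borel. B \<notin> I \<longrightarrow>
        (\<forall>\<D>. \<D> \<subseteq> I \<and> (card_of \<D>, card_of (UNIV :: real set)) \<in> ordLess \<longrightarrow>
           ordIso2 (card_of (B - \<Union>\<D>)) (card_of (UNIV :: real set)))"
    and sphere: "\<exists>a. a \<in> range (\<lambda>(x::'a, y::'a). dist x y) \<and> a \<noteq> 0 \<and>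
        (\<forall>x::'a. {y. dist x y = a} \<in> I)"
    and kappa: "ordIso2 (card_of (Pow K)) (card_of (UNIV :: real set))"
  shows "\<exists>B :: 'k \<Rightarrow> 'a set.
           (\<forall>\<xi>\<in>K. \<forall>\<eta>\<in>K. \<xi> \<noteq> \<eta> \<longrightarrow> B \<xi> \<inter> B \<eta> = {}) \<and>
           (\<forall>\<xi>\<in>K. completely_nonmeasurable I (B \<xi>)) \<and>
           (\<forall>\<xi>\<in>K. \<not> two_covering (B \<xi>)) \<and>
           S_covering K (B ` K)"
proof -
  let ?R = "card_of (UNIV :: real set)"
  have infR: "\<not> finite (UNIV :: real set)" by (rule infinite_UNIV_char_0)
  have infK: "\<not> finite K"
  proof
    assume "finite K"
    then have "finite (Pow K)" by simp
    then show False using card_of_ordIso_finite[OF kappa] infR by simp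
  qed
  have Kless: "(card_of K, ?R) \<in> ordLess"
    using card_of_Pow[of K] kappa ordLess_ordIso_trans by blast
  have emp: "(card_of ({}::'a set set), ?R) \<in> ordLess"
    using card_of_ordLess[of "UNIV::real set" "{}::'a set set"] by auto
  have UB0: "(UNIV::'a set) \<in> sets borel" by simp
  have "ordIso2 (card_of ((UNIV::'a set) - \<Union>({}::'a set set))) ?R"
    using large[rule_format, OF UB0 proper] emp by blast
  then have XR: "(card_of (UNIV::'a set), ?R) \<in> ordIso" by simp
  have XP: "(card_of (UNIV::'a set), card_of (Pow K)) \<in> ordIso"
    using ordIso_transitive[OF XR ordIso_symmetric[OF kappa]] .
  obtain d :: 'a where d: "d \<noteq> 0"
  proof -
    have "UNIV \<noteq> {0::'a}"
    proof
      assume eq: "UNIV = {0::'a}"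
      have c: "countable {0::'a}" by simp
      show False using uncountable c unfolding eq[symmetric] by simp
    qed
    then obtain d :: 'a where "d \<notin> {0}" by blast
    then show ?thesis using that by simp
  qed
  define Bor where "Bor = {A::'a set. A \<in> sets borel \<and> A \<notin> I}"
  define Fs where "Fs = {F::'a set. (card_of F, card_of K) \<in> ordIso}"
  define T where "T = Bor <+> Fs"
  have Bor_le: "(card_of Bor, card_of (Pow K)) \<in> ordLeq"
  proof -
    obtain G :: "'a set set" where G: "sets borel \<subseteq> range (interp G)"
      using borel_in_range_interp by blast
    have "(card_of Bor, card_of (UNIV::code set)) \<in> ordLeq"
      using G unfolding Bor_def by (intro surj_imp_ordLeq[of _ "interp G"]) auto
    then show ?thesis using codes_le_Pow[OF infK] ordLeq_transitive by blast
  qed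
  have Fs_le: "(card_of Fs, card_of (Pow K)) \<in> ordLeq"
    unfolding Fs_def by (rule Fs_le_Pow[OF infK XP])
  have infP: "\<not> finite (Pow K)" using infK by simp
  have c1: "(card_of T, card_of (Pow K <+> Pow K)) \<in> ordLeq"
    unfolding T_def by (rule card_of_Plus_mono[OF Bor_le Fs_le])
  have c2: "(card_of (Pow K <+> Pow K), card_of (Pow K)) \<in> ordIso"
    using card_of_Plus_infinite1[OF infP ordLeq_reflexive[OF card_of_Well_order]] .
  have "(card_of T, ?R) \<in> ordLeq"
    using ordLeq_ordIso_trans[OF ordLeq_ordIso_trans[OF c1 c2] kappa] .
  then obtain g :: "'a set + 'a set \<Rightarrow> real" where g: "inj_on g T"
    unfolding card_of_ordLeq[symmetric] by blast
  define task where "task \<alpha> = inv_into T g \<alpha>" for \<alpha>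
  have task_T: "\<alpha> \<in> g ` T \<Longrightarrow> task \<alpha> \<in> T" for \<alpha>
    unfolding task_def by (rule inv_into_into)
  have task_g: "x \<in> T \<Longrightarrow> task (g x) = x" for x
    unfolding task_def using g by (rule inv_into_f_f)
  define Good where "Good \<alpha> S h \<longleftrightarrow> inj_on h K \<and>
      (\<forall>\<xi>\<in>K. h \<xi> \<notin> S \<and> h \<xi> - d \<notin> S \<and> h \<xi> + d \<notin> S) \<and>
      (\<alpha> \<in> g ` T \<longrightarrow> (case task \<alpha> of Inl A \<Rightarrow> h ` K \<subseteq> A
                                    | Inr F \<Rightarrow> (\<exists>t. h ` K = (\<lambda>f. f + t) ` F)))"
    for \<alpha> S h
  have ex: "\<exists>h. Good \<alpha> S h" if S: "(card_of S, ?R) \<in> ordLess" for \<alpha> S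
  proof -
    define bad where "bad = S \<union> (\<lambda>s. s + d) ` S \<union> (\<lambda>s. s - d) ` S"
    have b1: "(card_of ((\<lambda>s. s + d) ` S), ?R) \<in> ordLess"
      using card_of_image S ordLeq_ordLess_trans by blast
    have b2: "(card_of ((\<lambda>s. s - d) ` S), ?R) \<in> ordLess"
      using card_of_image S ordLeq_ordLess_trans by blast
    have bad: "(card_of bad, ?R) \<in> ordLess"
      unfolding bad_def
      using card_of_Un_ordLess_infinite[OF infR card_of_Un_ordLess_infinite[OF infR S b1] b2] .
    have badI: "\<forall>\<xi>\<in>K. h \<xi> \<notin> S \<and> h \<xi> - d \<notin> S \<and> h \<xi> + d \<notin> S"
      if "\<forall>\<xi>\<in>K. h \<xi> \<notin> bad" for h
    proof
      fix \<xi> assume "\<xi> \<in> K"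
      then have nb: "h \<xi> \<notin> bad" using that by blast
      have 1: "h \<xi> \<notin> S" using nb unfolding bad_def by blast
      have 2: "h \<xi> - d \<notin> S"
      proof
        assume "h \<xi> - d \<in> S"
        then have "(h \<xi> - d) + d \<in> bad" unfolding bad_def by blast
        then show False using nb by simp
      qed
      have 3: "h \<xi> + d \<notin> S"
      proof
        assume "h \<xi> + d \<in> S"
        then have "(h \<xi> + d) - d \<in> bad" unfolding bad_def by blast
        then show False using nb by simp
      qed
      show "h \<xi> \<notin> S \<and> h \<xi> - d \<notin> S \<and> h \<xi> + d \<notin> S" using 1 2 3 by blast
    qed
    have generic: "\<exists>h. inj_on h K \<and> h ` K \<subseteq> A - bad" if "A \<in> Bor" for A
      using that unfolding Bor_def by (intro avoid[OF large singletons _ _ bad Kless]) auto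
    have UB: "UNIV \<in> Bor" using proper unfolding Bor_def by simp
    show ?thesis
    proof (cases "\<alpha> \<in> g ` T")
      case False
      obtain h where h: "inj_on h K" "h ` K \<subseteq> UNIV - bad" using generic[OF UB] by blast
      moreover have "\<forall>\<xi>\<in>K. h \<xi> \<notin> bad" using h(2) by blast
      ultimately have "Good \<alpha> S h" using False badI unfolding Good_def by simp
      then show ?thesis by blast
    next
      case True
      note tT = task_T[OF True]
      show ?thesis
      proof (cases "task \<alpha>")
        case (Inl A)
        then have "A \<in> Bor" using tT unfolding T_def by auto
        then obtain h where h: "inj_on h K" "h ` K \<subseteq> A - bad" using generic by blast
        moreover have "\<forall>\<xi>\<in>K. h \<xi> \<notin> bad" using h(2) by blast
        moreover have "h ` K \<subseteq> A" using h(2) by blast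
        ultimately have "Good \<alpha> S h" using Inl badI unfolding Good_def by simp
        then show ?thesis by blast
      next
        case (Inr F)
        then have "F \<in> Fs" using tT unfolding T_def by auto
        then obtain e where e: "bij_betw e K F"
          unfolding Fs_def using card_of_ordIso ordIso_symmetric by blast
        have FR: "(card_of F, ?R) \<in> ordLess"
          using \<open>F \<in> Fs\<close> Kless unfolding Fs_def using ordIso_ordLess_trans by blast
        define W where "W = (\<lambda>(b, f). b - f) ` (bad \<times> F)"
        have WR: "(card_of W, ?R) \<in> ordLess"
          unfolding W_def using card_of_image times_ordLess_infinite[OF infR bad FR]
            ordLeq_ordLess_trans by blast
        have "W \<noteq> UNIV"
        proof
          assume "W = UNIV"
          then have "(card_of (UNIV::'a set), ?R) \<in> ordLess" using WR by simp
          then show False using XR not_ordLess_ordIso by blast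
        qed
        then obtain t where t: "t \<notin> W" by blast
        define h where "h \<xi> = e \<xi> + t" for \<xi>
        have "inj_on h K" using e unfolding h_def bij_betw_def inj_on_def by auto
        moreover have "h ` K = (\<lambda>f. f + t) ` F"
          using e unfolding h_def bij_betw_def by auto
        moreover have "\<forall>\<xi>\<in>K. h \<xi> \<notin> bad"
        proof (intro ballI notI)
          fix \<xi> assume "\<xi> \<in> K" "h \<xi> \<in> bad"
          then have "t = (\<lambda>(b, f). b - f) (h \<xi>, e \<xi>)" "(h \<xi>, e \<xi>) \<in> bad \<times> F"
            using e unfolding h_def bij_betw_def by auto
          then show False using t unfolding W_def by blast
        qed
        ultimately have "Good \<alpha> S h" using Inr badI unfolding Good_def by (simp; blast)
        then show ?thesis by blast
      qed
    qed
  qed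
  obtain H where H: "\<And>\<alpha>. Good \<alpha> (\<Union>\<beta>\<in>underS ?R \<alpha>. H \<beta> ` K) (H \<alpha>)"
    using transfinite_construction[of ?R K Good, OF card_of_Card_order Field_card_of infR Kless ex]
    by blast
  define P where "P \<alpha> = (\<Union>\<beta>\<in>underS ?R \<alpha>. H \<beta> ` K)" for \<alpha>
  have Hinj: "inj_on (H \<alpha>) K" for \<alpha> using H[of \<alpha>] unfolding Good_def by blast
  have Hfr: "H \<alpha> \<xi> \<notin> P \<alpha> \<and> H \<alpha> \<xi> - d \<notin> P \<alpha> \<and> H \<alpha> \<xi> + d \<notin> P \<alpha>" if "\<xi> \<in> K" for \<alpha> \<xi>
    using H[of \<alpha>] that unfolding Good_def P_def by blast
  have Htask: "\<alpha> \<in> g ` T \<Longrightarrow> (case task \<alpha> of Inl A \<Rightarrow> H \<alpha> ` K \<subseteq> A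
                                    | Inr F \<Rightarrow> (\<exists>t. H \<alpha> ` K = (\<lambda>f. f + t) ` F))" for \<alpha>
    using H[of \<alpha>] unfolding Good_def by blast
  have tot: "\<beta> \<in> underS ?R \<alpha> \<or> \<alpha> \<in> underS ?R \<beta>" if "\<alpha> \<noteq> \<beta>" for \<alpha> \<beta>
  proof -
    have "total_on UNIV ?R"
      using card_of_well_order_on[of "UNIV::real set"]
      unfolding well_order_on_def linear_order_on_def by blast
    then have "(\<alpha>, \<beta>) \<in> ?R \<or> (\<beta>, \<alpha>) \<in> ?R" using that unfolding total_on_def by blast
    then show ?thesis using that unfolding underS_def by blast
  qed
  have inP: "\<beta> \<in> underS ?R \<alpha> \<Longrightarrow> \<eta> \<in> K \<Longrightarrow> H \<beta> \<eta> \<in> P \<alpha>" for \<alpha> \<beta> \<eta>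
    unfolding P_def by blast
  have Hsame: "\<alpha> = \<beta> \<and> \<xi> = \<eta>" if "\<xi> \<in> K" "\<eta> \<in> K" "H \<alpha> \<xi> = H \<beta> \<eta>" for \<alpha> \<beta> \<xi> \<eta>
  proof (cases "\<alpha> = \<beta>")
    case True
    then show ?thesis using that Hinj[of \<alpha>] unfolding inj_on_def by blast
  next
    case False
    then consider "\<beta> \<in> underS ?R \<alpha>" | "\<alpha> \<in> underS ?R \<beta>" using tot by blast
    then show ?thesis
    proof cases
      case 1
      then have "H \<beta> \<eta> \<in> P \<alpha>" using inP that by blast
      then show ?thesis using Hfr[OF that(1), of \<alpha>] that(3) by simp
    next
      case 2
      then have "H \<alpha> \<xi> \<in> P \<beta>" using inP that by blast
      then show ?thesis using Hfr[OF that(2), of \<beta>] that(3) by simp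
    qed
  qed
  have Hd: "H \<alpha> \<xi> \<noteq> H \<beta> \<xi> + d" if "\<xi> \<in> K" for \<alpha> \<beta> \<xi>
  proof
    assume eq: "H \<alpha> \<xi> = H \<beta> \<xi> + d"
    show False
    proof (cases "\<alpha> = \<beta>")
      case True
      then show False using eq d by simp
    next
      case False
      then consider "\<beta> \<in> underS ?R \<alpha>" | "\<alpha> \<in> underS ?R \<beta>" using tot by blast
      then show False
      proof cases
        case 1
        then have "H \<beta> \<xi> \<in> P \<alpha>" using inP that by blast
        moreover have "H \<beta> \<xi> = H \<alpha> \<xi> - d" using eq by simp
        ultimately show False using Hfr[OF that, of \<alpha>] by simp
      next
        case 2
        then have "H \<alpha> \<xi> \<in> P \<beta>" using inP that by blast
        then show False using Hfr[OF that, of \<beta>] eq by simp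
      qed
    qed
  qed
  define B where "B \<xi> = range (\<lambda>\<alpha>. H \<alpha> \<xi>)" for \<xi>
  have inB: "H \<alpha> \<xi> \<in> B \<xi>" for \<alpha> \<xi> unfolding B_def by blast
  have disj: "B \<xi> \<inter> B \<eta> = {}" if "\<xi> \<in> K" "\<eta> \<in> K" "\<xi> \<noteq> \<eta>" for \<xi> \<eta>
    using Hsame[OF that(1,2)] that(3) unfolding B_def by blast
  have meets: "A \<inter> B \<xi> \<noteq> {}" if "A \<in> sets borel" "A \<notin> I" "\<xi> \<in> K" for A \<xi>
  proof -
    have AT: "Inl A \<in> T" using that unfolding T_def Bor_def by blast
    then have "g (Inl A) \<in> g ` T" by blast
    from Htask[OF this] task_g[OF AT] have "H (g (Inl A)) ` K \<subseteq> A" by simp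
    then have "H (g (Inl A)) \<xi> \<in> A \<inter> B \<xi>" using that(3) inB by blast
    then show ?thesis by blast
  qed
  have nonI: "A \<inter> B \<xi> \<notin> I" if "A \<in> sets borel" "A \<notin> I" "\<xi> \<in> K" for A \<xi>
    using meets_imp_nonideal[OF sigma base, of "B \<xi>" A] meets[of _ \<xi>] that by blast
  obtain k1 k2 where k12: "k1 \<in> K" "k2 \<in> K" "k1 \<noteq> k2"
  proof -
    obtain k1 where "k1 \<in> K" using infK by (metis finite.emptyI ex_in_conv)
    moreover have "K - {k1} \<noteq> {}" using infK by (metis finite.emptyI finite_insert insert_Diff_single Diff_empty
          insert_absorb2 Diff_eq_empty_iff subset_singleton_iff)
    ultimately show ?thesis using that by blast
  qed
  have cnm: "completely_nonmeasurable I (B \<xi>)" if "\<xi> \<in> K" for \<xi>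
    unfolding completely_nonmeasurable_def
  proof (intro ballI impI conjI)
    fix A :: "'a set" assume A: "A \<in> sets borel" "A \<notin> I"
    show "A \<inter> B \<xi> \<notin> I" using nonI[OF A that] .
    obtain \<eta> where \<eta>: "\<eta> \<in> K" "\<eta> \<noteq> \<xi>" using k12 by blast
    have sub: "A \<inter> B \<eta> \<subseteq> A - B \<xi>" using disj[OF \<eta>(1) that \<eta>(2)] by blast
    show "A - B \<xi> \<notin> I"
    proof
      assume "A - B \<xi> \<in> I"
      then have "A \<inter> B \<eta> \<in> I" using sub sigma unfolding sigma_ideal_def by blast
      then show False using nonI[OF A \<eta>(1)] by blast
    qed
  qed
  have ntc: "\<not> two_covering (B \<xi>)" if "\<xi> \<in> K" for \<xi>
    unfolding two_covering_def
  proof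
    assume a: "\<forall>C. card C = 2 \<longrightarrow> (\<exists>x. (\<lambda>c. c + x) ` C \<subseteq> B \<xi>)"
    have "card {0, d} = 2" using d by simp
    then obtain x where "(\<lambda>c. c + x) ` {0, d} \<subseteq> B \<xi>" using a by blast
    then have "x \<in> B \<xi>" "d + x \<in> B \<xi>" by auto
    then obtain \<alpha> \<beta> where "x = H \<beta> \<xi>" "d + x = H \<alpha> \<xi>" unfolding B_def by blast
    then have "H \<alpha> \<xi> = H \<beta> \<xi> + d" by (simp add: add.commute)
    then show False using Hd[OF that] by blast
  qed
  have injB: "inj_on B K"
  proof
    fix \<xi> \<eta> assume "\<xi> \<in> K" "\<eta> \<in> K" "B \<xi> = B \<eta>"
    then show "\<xi> = \<eta>" using disj inB[of 0 \<xi>] by blast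
  qed
  have Scov: "S_covering K (B ` K)"
    unfolding S_covering_def
  proof (intro conjI allI impI)
    show "disjoint (B ` K)" unfolding disjoint_def using disj by blast
    have "bij_betw B K (B ` K)" using injB by (simp add: bij_betw_def)
    then show "ordIso2 (card_of (B ` K)) (card_of K)"
      using card_of_ordIsoI ordIso_symmetric by blast
    fix F :: "'a set" assume F: "ordIso2 (card_of F) (card_of K)"
    have FT: "Inr F \<in> T" using F unfolding T_def Fs_def by blast
    then have "g (Inr F) \<in> g ` T" by blast
    from Htask[OF this] task_g[OF FT] obtain t where t: "H (g (Inr F)) ` K = (\<lambda>f. f + t) ` F"
      by auto
    define \<alpha> where "\<alpha> = g (Inr F)"
    have t': "(\<lambda>f. f + t) ` F = H \<alpha> ` K" using t unfolding \<alpha>_def by simp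
    show "\<exists>t. (\<lambda>f. f + t) ` F \<subseteq> \<Union> (B ` K) \<and> (\<forall>A\<in>B ` K. card ((\<lambda>f. f + t) ` F \<inter> A) = 1)"
    proof (intro exI conjI ballI)
      show "(\<lambda>f. f + t) ` F \<subseteq> \<Union> (B ` K)" unfolding t' using inB by blast
      fix A assume "A \<in> B ` K"
      then obtain \<xi> where \<xi>: "\<xi> \<in> K" "A = B \<xi>" by blast
      have "H \<alpha> ` K \<inter> B \<xi> = {H \<alpha> \<xi>}"
      proof
        show "H \<alpha> ` K \<inter> B \<xi> \<subseteq> {H \<alpha> \<xi>}"
        proof
          fix y assume "y \<in> H \<alpha> ` K \<inter> B \<xi>"
          then obtain \<eta> \<beta> where "\<eta> \<in> K" "y = H \<alpha> \<eta>" "y = H \<beta> \<xi>" unfolding B_def by blast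
          then show "y \<in> {H \<alpha> \<xi>}" using Hsame[OF \<xi>(1), of \<eta> \<beta> \<alpha>] by auto
        qed
        show "{H \<alpha> \<xi>} \<subseteq> H \<alpha> ` K \<inter> B \<xi>" using \<xi> inB by blast
      qed
      then show "card ((\<lambda>f. f + t) ` F \<inter> A) = 1" unfolding t' \<xi>(2) by simp
    qed
  qed
  show ?thesis
    apply (rule exI[of _ B])
    using disj cnm ntc Scov by blast
qed
end
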